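(* Let $f,g_1,\dots,g_m$, $\phi$, $\psi$ be as in the context, and consider the HMCP: find $\hat x=\mathrm{col}(\bar x,\tau)\ge0$, $\hat s=\mathrm{col}(\bar s,\kappa)\ge 0$ with $\hat s=\psi(\hat x)$ and $\hat s\odot\hat x=0$. Then the HMCP is always asymptotically feasible. Furthermore, every asymptotically feasible solution of the HMCP is an asymptotically complementary solution.
   Context: $f,g_1,\dots,g_m:\mathbb{R}^n\to\mathbb{R}$ are twice continuously differentiable convex functions on $\mathbb{R}^n_+$, $g=\mathrm{col}(g_1,\dots,g_m)$, $\bar n=n+m$, $\phi:\mathbb{R}^{\bar n}_+\to\mathbb{R}^{\bar n}$, $\phi(x,y)=\mathrm{col}\big(\nabla f(x)+\sum_{i=1}^m y_i\nabla g_i(x),\ -g(x)\big)$, and $\psi:\mathbb{R}^{\bar n+1}_{++}\to\mathbb{R}^{\bar n+1}$, $\psi(\bar x,\tau)=\mathrm{col}\big(\tau\phi(\bar x/\tau),\ -\bar x^\top\phi(\bar x/\tau)\big)$; $\odot$ is the componentwise product. The HMCP is asymptotically feasible if there exist positive bounded $(\bar x^t,\tau^t,\bar s^t,\kappa^t)>0$, $t>0$, such that $\mathrm{col}(\bar s^t,\kappa^t)-\psi(\bar x^t,\tau^t)\to 0$ as $t\to\infty$; such a family is an asymptotically feasible solution. An asymptotically feasible solution with $(\bar x^t)^\top\bar s^t+\tau^t\kappa^t=0$ is called an asymptotically complementary solution. *)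

theory Defs
  imports "HOL-Analysis.Analysis"
begin

definition C2_on :: "('a::euclidean_space \<Rightarrow> real) \<Rightarrow> 'a set \<Rightarrow> bool" where
  "C2_on f U \<longleftrightarrow>
     (\<exists>(f'::'a \<Rightarrow> ('a \<Rightarrow>\<^sub>L real)) (f''::'a \<Rightarrow> ('a \<Rightarrow>\<^sub>L ('a \<Rightarrow>\<^sub>L real))).
        (\<forall>x\<in>U. (f has_derivative blinfun_apply (f' x)) (at x)) \<and>
        (\<forall>x\<in>U. (f' has_derivative blinfun_apply (f'' x)) (at x)) \<and>
        continuous_on U f'')"

definition nonneg_orthant :: "(real^'n) set" where
  "nonneg_orthant = {x. \<forall>i. 0 \<le> x $ i}"

definition grad :: "(real^'n \<Rightarrow> real) \<Rightarrow> real^'n \<Rightarrow> real^'n" where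
  "grad f x = (\<chi> i. frechet_derivative f (at x) (axis i 1))"

definition phi :: "(real^'n \<Rightarrow> real) \<Rightarrow> ('m::finite \<Rightarrow> real^'n \<Rightarrow> real)
    \<Rightarrow> (real^'n) \<times> (real^'m) \<Rightarrow> (real^'n) \<times> (real^'m)" where
  "phi f g xy = (case xy of (x, y) \<Rightarrow>
      (grad f x + (\<Sum>i\<in>UNIV. (y $ i) *\<^sub>R grad (g i) x), \<chi> i. - g i x))"

definition psi :: "(real^'n \<Rightarrow> real) \<Rightarrow> ('m::finite \<Rightarrow> real^'n \<Rightarrow> real)
    \<Rightarrow> ((real^'n) \<times> (real^'m)) \<times> real \<Rightarrow> ((real^'n) \<times> (real^'m)) \<times> real" where
  "psi f g xt = (case xt of (xb, tau) \<Rightarrow>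
      (tau *\<^sub>R phi f g ((1 / tau) *\<^sub>R xb), - (xb \<bullet> phi f g ((1 / tau) *\<^sub>R xb))))"

definition pos_pair :: "(real^'n) \<times> (real^'m) \<Rightarrow> bool" where
  "pos_pair v \<longleftrightarrow> (\<forall>i. 0 < fst v $ i) \<and> (\<forall>j. 0 < snd v $ j)"

definition asymp_feasible_sol ::
  "(((real^'n) \<times> (real^'m)) \<times> real \<Rightarrow> ((real^'n) \<times> (real^'m)) \<times> real)
   \<Rightarrow> (real \<Rightarrow> (real^'n) \<times> (real^'m)) \<Rightarrow> (real \<Rightarrow> real)
   \<Rightarrow> (real \<Rightarrow> (real^'n) \<times> (real^'m)) \<Rightarrow> (real \<Rightarrow> real) \<Rightarrow> bool" where
  "asymp_feasible_sol P X T S K \<longleftrightarrow>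
     (\<forall>t>0. pos_pair (X t) \<and> 0 < T t \<and> pos_pair (S t) \<and> 0 < K t) \<and>
     bounded ((\<lambda>t. (X t, T t, S t, K t)) ` {0<..}) \<and>
     ((\<lambda>t. (S t, K t) - P (X t, T t)) \<longlongrightarrow> 0) at_top"

definition asymp_feasible ::
  "(((real^'n) \<times> (real^'m)) \<times> real \<Rightarrow> ((real^'n) \<times> (real^'m)) \<times> real) \<Rightarrow> bool" where
  "asymp_feasible P \<longleftrightarrow> (\<exists>X T S K. asymp_feasible_sol P X T S K)"

definition asymp_compl_sol ::
  "(((real^'n) \<times> (real^'m)) \<times> real \<Rightarrow> ((real^'n) \<times> (real^'m)) \<times> real)
   \<Rightarrow> (real \<Rightarrow> (real^'n) \<times> (real^'m)) \<Rightarrow> (real \<Rightarrow> real)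
   \<Rightarrow> (real \<Rightarrow> (real^'n) \<times> (real^'m)) \<Rightarrow> (real \<Rightarrow> real) \<Rightarrow> bool" where
  "asymp_compl_sol P X T S K \<longleftrightarrow>
     asymp_feasible_sol P X T S K \<and>
     ((\<lambda>t. X t \<bullet> S t + T t * K t) \<longlongrightarrow> 0) at_top"

end

theory Submission
  imports Defs
begin

lemma psi_inner_zero:
  fixes f :: "real^'n \<Rightarrow> real" and g :: "'m::finite \<Rightarrow> real^'n \<Rightarrow> real"
  shows "(x, tau) \<bullet> psi f g (x, tau) = 0"
  by (simp add: psi_def inner_Pair inner_scaleR_right)

lemma psi_scale:
  fixes f :: "real^'n \<Rightarrow> real" and g :: "'m::finite \<Rightarrow> real^'n \<Rightarrow> real"
  assumes "e \<noteq> 0"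
  shows "psi f g (e *\<^sub>R c, e) = e *\<^sub>R psi f g (c, 1)"
  using assms by (simp add: psi_def scaleR_Pair)

lemma norm_pair_le4:
  fixes a :: "'a::real_normed_vector" and b :: "'b::real_normed_vector"
    and c :: "'c::real_normed_vector" and d :: "'d::real_normed_vector"
  shows "norm (a, b) \<le> norm (a, b, c, d)"
proof -
  have "norm b \<le> norm (b, c, d)" by (rule norm_fst_le)
  then have "(norm b)^2 \<le> (norm (b, c, d))^2" by (intro power_mono) auto
  then show ?thesis by (simp only: norm_Pair[of a b] norm_Pair[of a "(b,c,d)"]) (intro real_sqrt_le_mono add_left_mono)
qed

theorem lemma8:
  fixes f :: "real^'n \<Rightarrow> real" and g :: "'m::finite \<Rightarrow> real^'n \<Rightarrow> real"
  assumes "open U" and "nonneg_orthant \<subseteq> U"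
    and "C2_on f U" and "\<And>i. C2_on (g i) U"
    and "convex_on nonneg_orthant f" and "\<And>i. convex_on nonneg_orthant (g i)"
  shows "asymp_feasible (psi f g) \<and>
         (\<forall>X T S K. asymp_feasible_sol (psi f g) X T S K \<longrightarrow> asymp_compl_sol (psi f g) X T S K)"
proof
  define c :: "(real^'n) \<times> (real^'m)" where "c = (\<chi> i. 1, \<chi> j. 1)"
  define e :: "real \<Rightarrow> real" where "e t = 1 / (1 + t)" for t
  define w where "w = (c, 1::real) - psi f g (c, 1)"
  have cpos: "pos_pair (e t *\<^sub>R c)" if "t > 0" for t
    using that by (simp add: pos_pair_def c_def e_def)
  have epos: "e t > 0" if "t > 0" for t using that by (simp add: e_def)
  have ele: "e t \<le> 1" if "t > 0" for t using that by (simp add: e_def)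
  have e0: "(e \<longlongrightarrow> 0) at_top"
    unfolding e_def by real_asymp
  have "asymp_feasible_sol (psi f g) (\<lambda>t. e t *\<^sub>R c) e (\<lambda>t. e t *\<^sub>R c) e"
    unfolding asymp_feasible_sol_def
  proof (intro conjI allI impI)
    show "bounded ((\<lambda>t. (e t *\<^sub>R c, e t, e t *\<^sub>R c, e t)) ` {0<..})"
      unfolding bounded_iff
    proof (intro exI ballI)
      fix y assume "y \<in> (\<lambda>t. (e t *\<^sub>R c, e t, e t *\<^sub>R c, e t)) ` {0<..}"
      then obtain t where t: "t > 0" "y = e t *\<^sub>R (c, 1::real, c, 1::real)"
        by (auto simp: scaleR_Pair)
      have "norm y = \<bar>e t\<bar> * norm (c, 1::real, c, 1::real)" by (simp only: t(2) norm_scaleR)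
      then have "norm y = e t * norm (c, 1::real, c, 1::real)" using epos[of t] t by simp
      also have "\<dots> \<le> norm (c, 1::real, c, 1::real)"
        using ele[of t] t epos[of t] by (intro mult_left_le_one_le) auto
      finally show "norm y \<le> norm (c, 1::real, c, 1::real)" .
    qed
    have ev: "\<forall>\<^sub>F t in at_top. e t *\<^sub>R w = (e t *\<^sub>R c, e t) - psi f g (e t *\<^sub>R c, e t)"
      using eventually_gt_at_top[of 0]
    proof eventually_elim
      case (elim t)
      then show ?case using epos[of t] psi_scale[of "e t" f g c]
        by (simp add: w_def scaleR_Pair algebra_simps)
    qed
    have "((\<lambda>t. e t *\<^sub>R w) \<longlongrightarrow> 0 *\<^sub>R w) at_top"
      by (intro tendsto_scaleR e0 tendsto_const)
    then show "((\<lambda>t. (e t *\<^sub>R c, e t) - psi f g (e t *\<^sub>R c, e t)) \<longlongrightarrow> 0) at_top"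
      using ev by (simp add: tendsto_cong)
  qed (auto intro: cpos epos)
  then show "asymp_feasible (psi f g)" unfolding asymp_feasible_def by blast
next
  show "\<forall>X T S K. asymp_feasible_sol (psi f g) X T S K \<longrightarrow> asymp_compl_sol (psi f g) X T S K"
  proof (intro allI impI)
    fix X T S K assume A: "asymp_feasible_sol (psi f g) X T S K"
    define D where "D t = (S t, K t) - psi f g (X t, T t)" for t
    from A have D0: "(D \<longlongrightarrow> 0) at_top" and bd: "bounded ((\<lambda>t. (X t, T t, S t, K t)) ` {0<..})"
      unfolding asymp_feasible_sol_def D_def by auto
    from bd obtain B where B: "\<And>t. t > 0 \<Longrightarrow> norm (X t, T t, S t, K t) \<le> B"
      unfolding bounded_iff by auto
    have id: "X t \<bullet> S t + T t * K t = (X t, T t) \<bullet> D t" for t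
      using psi_inner_zero[of "X t" "T t" f g]
      by (simp add: D_def inner_diff_right inner_Pair)
    have "((\<lambda>t. B * norm (D t)) \<longlongrightarrow> 0) at_top"
      using tendsto_mult_right_zero[OF tendsto_norm_zero[OF D0]] by simp
    moreover have "\<forall>\<^sub>F t in at_top. norm (X t \<bullet> S t + T t * K t) \<le> B * norm (D t)"
      using eventually_gt_at_top[of 0]
    proof eventually_elim
      case (elim t)
      have "norm (X t \<bullet> S t + T t * K t) \<le> norm (X t, T t) * norm (D t)"
        unfolding id real_norm_def by (rule Cauchy_Schwarz_ineq2)
      also have "\<dots> \<le> B * norm (D t)"
        using B[OF elim] norm_pair_le4[of "X t" "T t" "S t" "K t"]
        by (intro mult_right_mono) auto
      finally show ?case .
    qed
    ultimately have "((\<lambda>t. X t \<bullet> S t + T t * K t) \<longlongrightarrow> 0) at_top"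
      by (rule Lim_null_comparison[rotated])
    with A show "asymp_compl_sol (psi f g) X T S K"
      unfolding asymp_compl_sol_def by blast
  qed
qed

end
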